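(* Let $\epsilon\in\{-1,0,1\}$, $f\in L^2(\Omega)$, and let $\mathbf u_h=(u_h,\hat u_h)\in\mathbf V_h$ be a solution of the H-IP problem. Then: (a) on every interior face $F=\partial E_1\cap\partial E_2$, $$\hat u_h=\{u_h\}_{\omega^\tau}-\varrho_1[\kappa\nabla_hu_h],$$ and $\hat u_h=0$ on boundary faces; (b) the normal numerical flux is single-valued: $\hat\sigma(\mathbf u_h)|_{E_1,F}\cdot n_1+\hat\sigma(\mathbf u_h)|_{E_2,F}\cdot n_2=0$ on every interior face; (c) on every face $F\in\mathcal F_h$ and every element $E$ with $F\in\mathcal F_E$, $$\hat\sigma(\mathbf u_h)|_{E,F}\cdot n_{E,F}=\big(-\{\kappa\nabla_hu_h\}^*_{\omega^\tau}+\varrho_0[u_h]\big)\cdot n_{E,F}.$$ In particular the normal numerical flux depends only on $u_h$.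
   Context: Setting. Let $\Omega\subset\mathbb R^d$, $d\in\{2,3\}$, be a bounded polyhedral Lipschitz domain. Let $\kappa:\Omega\to\mathbb R^{d\times d}$ be symmetric with $\kappa_{\min}|\xi|^2\le\xi^\top\kappa(x)\xi\le\kappa_{\max}|\xi|^2$ for all $\xi\in\mathbb R^d$ and a.e. $x$, where $0<\kappa_{\min}\le\kappa_{\max}<\infty$. Let $\mathcal T_h$ be a conforming affine simplicial mesh of $\Omega$ from a shape-regular family, with $h_E=\operatorname{diam}E$, $h=\max_Eh_E\le1$, and assume $\kappa$ is constant on each element, $\kappa_E:=\kappa|_E$. $\mathcal F_h=\mathcal F_h^i\cup\mathcal F_h^b$ is the set of faces (edges if $d=2$), split into interior and boundary faces; $\mathcal F_E$ is the set of faces of $E$, $n_{E,F}$ the unit outward normal to $F\in\mathcal F_E$, and $\eta_0:=\max_E\#\mathcal F_E$. For an interior face $F=\partial E_1\cap\partial E_2$, a subscript $i\in\{1,2\}$ denotes the trace from $E_i$ and $n_i:=n_{E_i,F}$. $\nabla_h$ is the elementwise gradient; $(\cdot,\cdot)_{\mathcal T_h}:=\sum_E(\cdot,\cdot)_{L^2(E)}$, $\langle\cdot,\cdot\rangle_{\partial\mathcal T_h}:=\sum_E\sum_{F\in\mathcal F_E}\langle\cdot,\cdot\rangle_{L^2(F)}$ (traces from $E$), $\langle\cdot,\cdot\rangle_{\mathcal F}:=\sum_{F\in\mathcal F}\langle\cdot,\cdot\rangle_{L^2(F)}$ for a set $\mathcal F$ of faces. Fix $k\ge1$: $V_h:=\{v\in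 L^2(\Omega):v|_E\in\mathbb P_k(E)\ \forall E\}$, $\hat V_h:=\{\hat v\in L^2(\bigcup_{F\in\mathcal F_h}F):\hat v|_F\in\mathbb P_k(F)\ \forall F,\ \hat v|_F=0\ \forall F\in\mathcal F_h^b\}$, $\mathbf V_h:=V_h\times\hat V_h$ ($\mathbb P_k$ = polynomials of total degree $\le k$). Trace operators. For an interior face and a pair of weights $(\omega_1,\omega_2)$ with $\omega_1+\omega_2=1$ (boundary faces: $(1,0)$): $[\varphi]:=\varphi_1n_1+\varphi_2n_2$, $\{\varphi\}_\omega:=\omega_1\varphi_1+\omega_2\varphi_2$, $\{\varphi\}^*_\omega:=\omega_2\varphi_1+\omega_1\varphi_2$; on a boundary face $F\subset\partial E$: $[\varphi]:=\varphi|_En_{E,F}$, $\{\varphi\}_\omega=\{\varphi\}^*_\omega:=\varphi|_E$. Means of vector fields are componentwise; for a vector field $\mathbf b$, $[\mathbf b]:=\mathbf b_1\cdot n_1+\mathbf b_2\cdot n_2$ (scalar) on interior faces. HDG jump: $[\![(\varphi,\hat\varphi)]\!]|_{E,F}:=(\varphi|_E-\hat\varphi)n_{E,F}$ for $F\in\mathcal F_E$. Penalty and coefficients. Let $C_T>0$ be such that $\|w\|_{L^2(F)}^2\le C_T^2h_E^{-1}\|w\|_{L^2(E)}^2$ for all $E$, $F\in\mathcal F_E$, $w\in\mathbb P_k(E)$. Fix $\alpha_0>0$ and set $\tau|_{E,F}:=\alpha_0C_T^2\kappa_{E,F}h_E^{-1}$ with $\kappa_{E,F}:=n_{E,F}^\top\kappa_En_{E,F}$.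 On an interior face with $\tau_i:=\tau|_{E_i,F}$: $\omega^\tau_i:=\tau_i/(\tau_1+\tau_2)$, $\varrho_0:=\tau_1\tau_2/(\tau_1+\tau_2)$, $\varrho_1:=1/(\tau_1+\tau_2)$; on a boundary face $F\subset\partial E$: $\omega^\tau:=(1,0)$, $\varrho_0:=\tau|_{E,F}$. H-IP method. For $\epsilon\in\{-1,0,1\}$, $\sigma(v):=-\kappa\nabla_hv$, and for $\mathbf u=(u,\hat u)\in\mathbf V_h$, $\hat\sigma(\mathbf u):=\sigma(u)+\tau[\![\mathbf u]\!]$ on $\partial\mathcal T_h$ (double-valued). $\mathbf a_h^{(\epsilon)}(\mathbf u,\mathbf v):=(\kappa\nabla_hu,\nabla_hv)_{\mathcal T_h}+\langle\hat\sigma(\mathbf u),[\![\mathbf v]\!]\rangle_{\partial\mathcal T_h}+\epsilon\langle\sigma(v),[\![\mathbf u]\!]\rangle_{\partial\mathcal T_h}$ for $\mathbf u=(u,\hat u),\mathbf v=(v,\hat v)\in\mathbf V_h$. The H-IP problem: find $\mathbf u_h\in\mathbf V_h$ with $\mathbf a_h^{(\epsilon)}(\mathbf u_h,\mathbf v_h)=(f,v_h)_{\mathcal T_h}$ for all $\mathbf v_h=(v_h,\hat v_h)\in\mathbf V_h$. *)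

theory Defs
  imports "HOL-Analysis.Analysis"
begin

(* Points are in R^d, modelled as real^'n with d = CARD('n).
   A simplex element / face is represented by its (finite) vertex set;
   the geometric object is its convex hull. *)

definition lipschitz_domain :: "(real^'n) set \<Rightarrow> bool" where
  "lipschitz_domain \<Omega> \<longleftrightarrow> open \<Omega> \<and> bounded \<Omega> \<and> connected \<Omega> \<and>
     (\<forall>x\<in>frontier \<Omega>. \<exists>r>0. \<exists>a::real^'n. norm a = 1 \<and>
        (\<exists>g L. L-lipschitz_on {z. z \<bullet> a = 0} g \<and>
           \<Omega> \<inter> ball x r = {y \<in> ball x r. g (y - (y \<bullet> a) *\<^sub>R a) < y \<bullet> a}))"

definition is_face :: "(real^'n) set \<Rightarrow> (real^'n) set \<Rightarrow> bool" where
  "is_face V F \<longleftrightarrow> F \<subseteq> V \<and> card F = CARD('n)"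

definition faces_of :: "(real^'n) set set \<Rightarrow> (real^'n) set set" where
  "faces_of T = {F. \<exists>V\<in>T. is_face V F}"

definition interior_face :: "(real^'n) set set \<Rightarrow> (real^'n) set \<Rightarrow> bool" where
  "interior_face T F \<longleftrightarrow> F \<in> faces_of T \<and>
     (\<exists>V1\<in>T. \<exists>V2\<in>T. V1 \<noteq> V2 \<and> F \<subseteq> V1 \<and> F \<subseteq> V2)"

definition boundary_face :: "(real^'n) set set \<Rightarrow> (real^'n) set \<Rightarrow> bool" where
  "boundary_face T F \<longleftrightarrow> F \<in> faces_of T \<and> \<not> interior_face T F"

definition conforming_simplicial_mesh :: "(real^'n) set \<Rightarrow> (real^'n) set set \<Rightarrow> bool" where
  "conforming_simplicial_mesh \<Omega> T \<longleftrightarrow> finite T \<and> T \<noteq> {} \<and>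
     (\<forall>V\<in>T. finite V \<and> card V = CARD('n) + 1 \<and> \<not> affine_dependent V) \<and>
     closure \<Omega> = (\<Union>V\<in>T. convex hull V) \<and>
     (\<forall>V1\<in>T. \<forall>V2\<in>T. V1 \<noteq> V2 \<longrightarrow>
        interior (convex hull V1) \<inter> interior (convex hull V2) = {} \<and>
        (convex hull V1) \<inter> (convex hull V2) = convex hull (V1 \<inter> V2))"

definition hE :: "(real^'n) set \<Rightarrow> real" where
  "hE V = diameter (convex hull V)"

definition onormal :: "(real^'n) set \<Rightarrow> (real^'n) set \<Rightarrow> real^'n" where
  "onormal V F = (THE n. norm n = 1 \<and> (\<forall>x\<in>F. \<forall>y\<in>F. n \<bullet> (x - y) = 0) \<and>
                        (\<forall>x\<in>F. \<forall>q\<in>V - F. n \<bullet> (q - x) < 0))"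

(* surface (Hausdorff (d-1)-dimensional) integral over a flat face conv F,
   realised as the d-dimensional Lebesgue integral over the right prism
   conv F + [0,1] n_F of height 1 of the extension of g that is constant
   in the normal direction (Fubini). *)
definition fnormal :: "(real^'n) set \<Rightarrow> real^'n" where
  "fnormal F = (SOME n. norm n = 1 \<and> (\<forall>x\<in>F. \<forall>y\<in>F. n \<bullet> (x - y) = 0))"

definition fproj :: "(real^'n) set \<Rightarrow> real^'n \<Rightarrow> real^'n" where
  "fproj F y = y - ((y - (SOME x. x \<in> F)) \<bullet> fnormal F) *\<^sub>R fnormal F"

definition prism :: "(real^'n) set \<Rightarrow> (real^'n) set" where
  "prism F = {x + t *\<^sub>R fnormal F | x t. x \<in> convex hull F \<and> 0 \<le> t \<and> t \<le> 1}"

definition face_integral :: "(real^'n) set \<Rightarrow> (real^'n \<Rightarrow> real) \<Rightarrow> real" where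
  "face_integral F g = integral (prism F) (\<lambda>y. g (fproj F y))"

definition Pk :: "nat \<Rightarrow> (real^'n \<Rightarrow> real) set" where
  "Pk k = {p. \<exists>c :: ('n \<Rightarrow> nat) \<Rightarrow> real.
      p = (\<lambda>x. \<Sum>\<alpha>\<in>{\<alpha>. (\<Sum>i\<in>UNIV. \<alpha> i) \<le> k}. c \<alpha> * (\<Prod>i\<in>UNIV. (x $ i) ^ (\<alpha> i)))}"

definition grad :: "(real^'n \<Rightarrow> real) \<Rightarrow> real^'n \<Rightarrow> real^'n" where
  "grad p x = (THE D. GDERIV p x :> D)"

(* u_h \<in> V_h: elementwise polynomial, u V = polynomial on element conv V *)
definition in_Vh :: "nat \<Rightarrow> (real^'n) set set \<Rightarrow> ((real^'n) set \<Rightarrow> real^'n \<Rightarrow> real) \<Rightarrow> bool" where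
  "in_Vh k T u \<longleftrightarrow> (\<forall>V\<in>T. u V \<in> Pk k)"

definition in_Vhat :: "nat \<Rightarrow> (real^'n) set set \<Rightarrow> ((real^'n) set \<Rightarrow> real^'n \<Rightarrow> real) \<Rightarrow> bool" where
  "in_Vhat k T uh \<longleftrightarrow> (\<forall>F\<in>faces_of T. uh F \<in> Pk k) \<and>
     (\<forall>F. boundary_face T F \<longrightarrow> (\<forall>x\<in>convex hull F. uh F x = 0))"

definition kappaEF :: "((real^'n) set \<Rightarrow> real^'n^'n) \<Rightarrow> (real^'n) set \<Rightarrow> (real^'n) set \<Rightarrow> real" where
  "kappaEF kap V F = onormal V F \<bullet> (kap V *v onormal V F)"

definition tauEF :: "real \<Rightarrow> real \<Rightarrow> ((real^'n) set \<Rightarrow> real^'n^'n) \<Rightarrow> (real^'n) set \<Rightarrow> (real^'n) set \<Rightarrow> real" where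
  "tauEF alpha0 CT kap V F = alpha0 * CT\<^sup>2 * kappaEF kap V F / hE V"

definition sigma :: "((real^'n) set \<Rightarrow> real^'n^'n) \<Rightarrow> ((real^'n) set \<Rightarrow> real^'n \<Rightarrow> real)
     \<Rightarrow> (real^'n) set \<Rightarrow> real^'n \<Rightarrow> real^'n" where
  "sigma kap u V x = - (kap V *v grad (u V) x)"

definition hjump :: "((real^'n) set \<Rightarrow> real^'n \<Rightarrow> real) \<Rightarrow> ((real^'n) set \<Rightarrow> real^'n \<Rightarrow> real)
     \<Rightarrow> (real^'n) set \<Rightarrow> (real^'n) set \<Rightarrow> real^'n \<Rightarrow> real^'n" where
  "hjump u uh V F x = (u V x - uh F x) *\<^sub>R onormal V F"

definition hatsigma :: "real \<Rightarrow> real \<Rightarrow> ((real^'n) set \<Rightarrow> real^'n^'n)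
     \<Rightarrow> ((real^'n) set \<Rightarrow> real^'n \<Rightarrow> real) \<Rightarrow> ((real^'n) set \<Rightarrow> real^'n \<Rightarrow> real)
     \<Rightarrow> (real^'n) set \<Rightarrow> (real^'n) set \<Rightarrow> real^'n \<Rightarrow> real^'n" where
  "hatsigma alpha0 CT kap u uh V F x =
     sigma kap u V x + tauEF alpha0 CT kap V F *\<^sub>R hjump u uh V F x"

definition aH :: "real \<Rightarrow> real \<Rightarrow> real \<Rightarrow> (real^'n) set set \<Rightarrow> ((real^'n) set \<Rightarrow> real^'n^'n)
     \<Rightarrow> ((real^'n) set \<Rightarrow> real^'n \<Rightarrow> real) \<Rightarrow> ((real^'n) set \<Rightarrow> real^'n \<Rightarrow> real)
     \<Rightarrow> ((real^'n) set \<Rightarrow> real^'n \<Rightarrow> real) \<Rightarrow> ((real^'n) set \<Rightarrow> real^'n \<Rightarrow> real) \<Rightarrow> real" where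
  "aH eps alpha0 CT T kap u uh v vh =
     (\<Sum>V\<in>T. integral (convex hull V) (\<lambda>x. (kap V *v grad (u V) x) \<bullet> grad (v V) x))
   + (\<Sum>V\<in>T. \<Sum>F\<in>{F. is_face V F}.
        face_integral F (\<lambda>x. hatsigma alpha0 CT kap u uh V F x \<bullet> hjump v vh V F x))
   + eps * (\<Sum>V\<in>T. \<Sum>F\<in>{F. is_face V F}.
        face_integral F (\<lambda>x. sigma kap v V x \<bullet> hjump u uh V F x))"

definition HIP_solution :: "nat \<Rightarrow> real \<Rightarrow> real \<Rightarrow> real \<Rightarrow> (real^'n) set set \<Rightarrow> ((real^'n) set \<Rightarrow> real^'n^'n)
     \<Rightarrow> (real^'n \<Rightarrow> real) \<Rightarrow> ((real^'n) set \<Rightarrow> real^'n \<Rightarrow> real) \<Rightarrow> ((real^'n) set \<Rightarrow> real^'n \<Rightarrow> real) \<Rightarrow> bool" where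
  "HIP_solution k eps alpha0 CT T kap f u uh \<longleftrightarrow> in_Vh k T u \<and> in_Vhat k T uh \<and>
     (\<forall>v vh. in_Vh k T v \<and> in_Vhat k T vh \<longrightarrow>
        aH eps alpha0 CT T kap u uh v vh = (\<Sum>V\<in>T. (LINT x:convex hull V|lebesgue. f x * v V x)))"

end

theory Submission
  imports Defs
begin


definition pmon :: "('n::finite \<Rightarrow> nat) \<Rightarrow> real^'n \<Rightarrow> real" where
  "pmon a x = (\<Prod>i\<in>UNIV. (x $ i) ^ (a i))"

definition Aset :: "nat \<Rightarrow> ('n::finite \<Rightarrow> nat) set" where
  "Aset k = {a. (\<Sum>i\<in>UNIV. a i) \<le> k}"

lemma finite_Aset: "finite (Aset k :: ('n::finite \<Rightarrow> nat) set)"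
proof -
  have "Aset k \<subseteq> PiE (UNIV::'n set) (\<lambda>_. {..k})"
    unfolding Aset_def PiE_def Pi_def extensional_def
    by (auto intro: order_trans[OF member_le_sum[of _ UNIV]])
  moreover have "finite (PiE (UNIV::'n set) (\<lambda>_. {..k}))" by (intro finite_PiE) auto
  ultimately show ?thesis by (rule finite_subset)
qed

lemma Pk_alt: "Pk k = {p. \<exists>c. p = (\<lambda>x. \<Sum>a\<in>Aset k. c a * pmon a x)}"
  unfolding Pk_def Aset_def pmon_def by simp

lemma Pk_zero: "(\<lambda>x. 0) \<in> Pk k"
  unfolding Pk_alt by (rule CollectI, rule exI[of _ "\<lambda>_. 0"]) simp

lemma Pk_add: "p \<in> Pk k \<Longrightarrow> q \<in> Pk k \<Longrightarrow> (\<lambda>x. p x + q x) \<in> Pk k"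
  unfolding Pk_alt
proof (clarify)
  fix c d
  show "\<exists>e. (\<lambda>x. (\<Sum>a\<in>Aset k. c a * pmon a x) + (\<Sum>a\<in>Aset k. d a * pmon a x)) = (\<lambda>x. \<Sum>a\<in>Aset k. e a * pmon a x)"
    by (rule exI[of _ "\<lambda>a. c a + d a"]) (simp add: sum.distrib algebra_simps)
qed

lemma Pk_scale: "p \<in> Pk k \<Longrightarrow> (\<lambda>x. r * p x) \<in> Pk k"
  unfolding Pk_alt
proof (clarify)
  fix c
  show "\<exists>e. (\<lambda>x. r * (\<Sum>a\<in>Aset k. c a * pmon a x)) = (\<lambda>x. \<Sum>a\<in>Aset k. e a * pmon a x)"
    by (rule exI[of _ "\<lambda>a. r * c a"]) (simp add: sum_distrib_left algebra_simps)
qed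

lemma Pk_diff: "p \<in> Pk k \<Longrightarrow> q \<in> Pk k \<Longrightarrow> (\<lambda>x. p x - q x) \<in> Pk k"
  using Pk_add[of p k "\<lambda>x. (-1) * q x"] Pk_scale[of q k "-1"] by simp

lemma Pk_sum: "finite I \<Longrightarrow> (\<And>i. i \<in> I \<Longrightarrow> f i \<in> Pk k) \<Longrightarrow> (\<lambda>x. \<Sum>i\<in>I. f i x) \<in> Pk k"
proof (induction I rule: finite_induct)
  case empty then show ?case using Pk_zero by simp
next
  case (insert a F)
  then show ?case using Pk_add[of "f a" k "\<lambda>x. \<Sum>i\<in>F. f i x"] by simp
qed

lemma Pk_mon: "a \<in> Aset k \<Longrightarrow> pmon a \<in> Pk k"
  unfolding Pk_alt
  by (rule CollectI, rule exI[of _ "\<lambda>b. if b = a then 1 else 0"])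
     (simp add: if_distrib[of "\<lambda>t. t * _"] sum.delta[OF finite_Aset] cong: if_cong)

lemma cont_pmon: "continuous_on S (pmon a)"
  unfolding pmon_def by (intro continuous_intros)

lemma cont_Pk: "p \<in> Pk k \<Longrightarrow> continuous_on S p"
  unfolding Pk_alt by (auto intro!: continuous_intros cont_pmon[unfolded pmon_def] simp: pmon_def)

definition dmon :: "('n::finite \<Rightarrow> nat) \<Rightarrow> real^'n \<Rightarrow> real^'n" where
  "dmon a x = (\<chi> j. real (a j) * pmon (a(j := a j - 1)) x)"

lemma pmon_remove: "pmon (a(j := a j - 1)) x = (\<Prod>i\<in>UNIV - {j}. x $ i ^ a i) * x $ j ^ (a j - 1)"
  unfolding pmon_def
  by (subst prod.remove[of UNIV j]) (auto intro!: prod.cong)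

lemma deriv_pmon: "(pmon a has_derivative (\<lambda>h. h \<bullet> dmon a x)) (at x)"
proof -
  have "((\<lambda>x. \<Prod>i\<in>UNIV. (x $ i) ^ (a i)) has_derivative
     (\<lambda>y. \<Sum>i\<in>UNIV. (of_nat (a i) * y $ i * x $ i ^ (a i - 1)) * (\<Prod>j\<in>UNIV - {i}. x $ j ^ a j))) (at x)"
    by (intro has_derivative_prod has_derivative_power bounded_linear.has_derivative[OF bounded_linear_vec_nth] has_derivative_ident)
  moreover have "(\<lambda>y. \<Sum>i\<in>UNIV. (of_nat (a i) * y $ i * x $ i ^ (a i - 1)) * (\<Prod>j\<in>UNIV - {i}. x $ j ^ a j))
     = (\<lambda>h. h \<bullet> dmon a x)"
    unfolding dmon_def inner_vec_def pmon_remove by (auto intro!: sum.cong)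
  ultimately show ?thesis unfolding pmon_def by simp
qed

lemma grad_unique: "GDERIV p x :> D \<Longrightarrow> grad p x = D"
proof -
  assume h: "GDERIV p x :> D"
  have "\<And>D'. GDERIV p x :> D' \<Longrightarrow> D' = D"
  proof -
    fix D' assume h2: "GDERIV p x :> D'"
    have "(\<lambda>h. h \<bullet> D') = (\<lambda>h. h \<bullet> D)" using has_derivative_unique h h2 unfolding gderiv_def by blast
    then have "(D' - D) \<bullet> D' = (D' - D) \<bullet> D" by metis
    then have "(D' - D) \<bullet> (D' - D) = 0" by (simp add: inner_diff_right)
    then show "D' = D" by simp
  qed
  then show ?thesis unfolding grad_def using h by (rule the_equality[rotated])
qed

lemma grad_Pk_formula:
  "grad (\<lambda>x. \<Sum>a\<in>Aset k. c a * pmon a x) x = (\<Sum>a\<in>Aset k. c a *\<^sub>R dmon a x)"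
proof (rule grad_unique)
  have "((\<lambda>x. \<Sum>a\<in>Aset k. c a * pmon a x) has_derivative (\<lambda>h. \<Sum>a\<in>Aset k. c a * (h \<bullet> dmon a x))) (at x)"
    by (intro has_derivative_sum has_derivative_mult_right deriv_pmon)
  moreover have "(\<lambda>h. \<Sum>a\<in>Aset k. c a * (h \<bullet> dmon a x)) = (\<lambda>h. h \<bullet> (\<Sum>a\<in>Aset k. c a *\<^sub>R dmon a x))"
    by (simp add: inner_sum_right)
  ultimately show "GDERIV (\<lambda>x. \<Sum>a\<in>Aset k. c a * pmon a x) x :> (\<Sum>a\<in>Aset k. c a *\<^sub>R dmon a x)"
    unfolding gderiv_def by simp
qed

lemma grad_comp_Pk: assumes "p \<in> Pk k" shows "(\<lambda>x. grad p x $ j) \<in> Pk k"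
proof -
  obtain c where c: "p = (\<lambda>x. \<Sum>a\<in>Aset k. c a * pmon a x)" using assms unfolding Pk_alt by auto
  have "(\<lambda>x. grad p x $ j) = (\<lambda>x. \<Sum>a\<in>Aset k. (c a * real (a j)) * pmon (a(j := a j - 1)) x)"
    unfolding c grad_Pk_formula dmon_def by (simp add: sum_component algebra_simps)
  also have "\<dots> \<in> Pk k"
  proof (rule Pk_sum[OF finite_Aset])
    fix a :: "'a \<Rightarrow> nat" assume a: "a \<in> Aset k"
    have "(\<Sum>i\<in>UNIV. (a(j := a j - 1)) i) \<le> (\<Sum>i\<in>UNIV. a i)"
      by (intro sum_mono) auto
    then have "a(j := a j - 1) \<in> Aset k" using a unfolding Aset_def by simp
    then show "(\<lambda>x. (c a * real (a j)) * pmon (a(j := a j - 1)) x) \<in> Pk k"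
      by (intro Pk_scale Pk_mon)
  qed
  finally show ?thesis .
qed

lemma grad_zero: "grad (\<lambda>x. 0::real) x = 0"
  by (rule grad_unique) (rule GDERIV_const)



lemma span_diffs_UNIV:
  fixes V :: "(real^'n) set"
  assumes "finite V" "card V = CARD('n) + 1" "\<not> affine_dependent V" "f0 \<in> V"
  shows "span ((\<lambda>v. v - f0) ` V) = UNIV"
proof -
  let ?B = "(\<lambda>x. -f0 + x) ` (V - {f0})"
  have V: "insert f0 (V - {f0}) = V" using assms by auto
  have ind: "independent ?B"
    using affine_dependent_iff_dependent[of f0 "V - {f0}"] assms(3) V by auto
  have "card ?B = card (V - {f0})" by (rule card_image) (auto simp: inj_on_def)
  also have "\<dots> = CARD('n)" using assms by simp
  finally have "dim (span ?B) = CARD('n)" using dim_span_eq_card_independent[OF ind] by simp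
  then have "span ?B = UNIV" using dim_eq_full[of ?B] by (simp add: dim_span)
  moreover have "?B \<subseteq> (\<lambda>v. v - f0) ` V" by auto
  ultimately show ?thesis by (metis span_mono top.extremum_uniqueI)
qed

lemma perp_all_zero:
  fixes m :: "real^'n"
  assumes "span S = UNIV" "\<And>y. y \<in> S \<Longrightarrow> m \<bullet> y = 0"
  shows "m = 0"
proof -
  have "orthogonal m m" by (rule orthogonal_to_span) (use assms in \<open>auto simp: orthogonal_def\<close>)
  then show ?thesis by (simp add: orthogonal_def)
qed

lemma normal_exists:
  fixes F :: "(real^'n) set"
  assumes "finite F" "card F = CARD('n)" "f0 \<in> F"
  shows "\<exists>m. m \<noteq> 0 \<and> (\<forall>x\<in>F. m \<bullet> (x - f0) = 0)"
proof -
  let ?S = "(\<lambda>x. x - f0) ` (F - {f0})"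
  have "dim ?S \<le> card ?S" by (rule dim_le_card) (auto intro: span_base simp: assms)
  also have "\<dots> \<le> card (F - {f0})" by (rule card_image_le) (simp add: assms)
  also have "\<dots> < CARD('n)" using assms by (simp add: card_Diff_singleton)
  finally have "dim ?S < DIM(real^'n)" by simp
  then obtain m where m: "m \<noteq> 0" "\<And>y. y \<in> span ?S \<Longrightarrow> orthogonal m y"
    using orthogonal_to_subspace_exists[of ?S] by blast
  have "\<forall>x\<in>F. m \<bullet> (x - f0) = 0"
  proof
    fix x assume "x \<in> F"
    show "m \<bullet> (x - f0) = 0"
    proof (cases "x = f0")
      case False
      then have "x - f0 \<in> span ?S" using \<open>x \<in> F\<close> by (intro span_base) auto
      then show ?thesis using m(2) by (simp add: orthogonal_def)
    qed simp
  qed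
  then show ?thesis using m(1) by blast
qed

lemma hull_in_hyperplane:
  fixes F :: "(real^'n) set"
  assumes "\<forall>x\<in>F. n \<bullet> (x - f0) = 0" "y \<in> convex hull F"
  shows "n \<bullet> (y - f0) = 0"
proof -
  have "convex hull F \<subseteq> {y. n \<bullet> y = n \<bullet> f0}"
    by (rule hull_minimal) (use assms in \<open>auto simp: inner_diff_right convex_hyperplane\<close>)
  then show ?thesis using assms(2) by (auto simp: inner_diff_right)
qed

definition simplexV :: "(real^'n) set \<Rightarrow> bool" where
  "simplexV V \<longleftrightarrow> finite V \<and> card V = CARD('n) + 1 \<and> \<not> affine_dependent V"

lemma face_basic:
  fixes V F :: "(real^'n) set"
  assumes "simplexV V" "is_face V F"
  shows "\<exists>q. V - F = {q} \<and> V = insert q F \<and> q \<notin> F" "finite F" "F \<noteq> {}"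
proof -
  have fin: "finite V" "card V = CARD('n) + 1" "F \<subseteq> V" "card F = CARD('n)"
    using assms unfolding simplexV_def is_face_def by auto
  then have "card (V - F) = 1" by (simp add: card_Diff_subset finite_subset)
  then obtain q where "V - F = {q}" by (rule card_1_singletonE)
  then show "\<exists>q. V - F = {q} \<and> V = insert q F \<and> q \<notin> F" using fin by blast
  show "finite F" using fin finite_subset by blast
  show "F \<noteq> {}" using fin by auto
qed

definition onP :: "(real^'n) set \<Rightarrow> (real^'n) set \<Rightarrow> real^'n \<Rightarrow> bool" where
  "onP V F n \<longleftrightarrow> norm n = 1 \<and> (\<forall>x\<in>F. \<forall>y\<in>F. n \<bullet> (x - y) = 0) \<and>
                        (\<forall>x\<in>F. \<forall>q\<in>V - F. n \<bullet> (q - x) < 0)"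

lemma onP_unique:
  fixes V F :: "(real^'n) set"
  assumes "simplexV V" "is_face V F" "onP V F n1" "onP V F n2"
  shows "n1 = n2"
proof -
  obtain q where q: "V - F = {q}" "V = insert q F" "q \<notin> F" using face_basic[OF assms(1,2)] by blast
  obtain f0 where f0: "f0 \<in> F" using face_basic[OF assms(1,2)] by blast
  have sp: "span ((\<lambda>v. v - f0) ` V) = UNIV"
    using assms(1) f0 q unfolding simplexV_def by (intro span_diffs_UNIV) auto
  define a where "a = n1 \<bullet> (q - f0)"
  define b where "b = n2 \<bullet> (q - f0)"
  have a: "a < 0" using assms(3) q f0 unfolding onP_def a_def by auto
  have b: "b < 0" using assms(4) q f0 unfolding onP_def b_def by auto
  have "b *\<^sub>R n1 - a *\<^sub>R n2 = 0"
  proof (rule perp_all_zero[OF sp])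
    fix y assume "y \<in> (\<lambda>v. v - f0) ` V"
    then obtain v where v: "v \<in> V" "y = v - f0" by auto
    show "(b *\<^sub>R n1 - a *\<^sub>R n2) \<bullet> y = 0"
    proof (cases "v = q")
      case True then show ?thesis using v by (simp add: a_def b_def inner_diff_left)
    next
      case False
      then have "v \<in> F" using v q by auto
      then show ?thesis using assms(3,4) f0 v unfolding onP_def by (simp add: inner_diff_left)
    qed
  qed
  then have e: "b *\<^sub>R n1 = a *\<^sub>R n2" by simp
  then have "norm (b *\<^sub>R n1) = norm (a *\<^sub>R n2)" by simp
  then have "\<bar>b\<bar> = \<bar>a\<bar>" using assms(3,4) unfolding onP_def by simp
  then have "a = b" using a b by simp
  then show ?thesis using e a by simp
qed

lemma onP_exists:
  fixes V F :: "(real^'n) set"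
  assumes "simplexV V" "is_face V F"
  shows "\<exists>n. onP V F n"
proof -
  obtain q where q: "V - F = {q}" "V = insert q F" "q \<notin> F" using face_basic[OF assms(1,2)] by blast
  obtain f0 where f0: "f0 \<in> F" using face_basic[OF assms(1,2)] by blast
  have sp: "span ((\<lambda>v. v - f0) ` V) = UNIV"
    using assms(1) f0 q unfolding simplexV_def by (intro span_diffs_UNIV) auto
  obtain m where m: "m \<noteq> 0" "\<forall>x\<in>F. m \<bullet> (x - f0) = 0"
    using normal_exists[of F f0] face_basic[OF assms] f0 assms(2) unfolding is_face_def by blast
  define s where "s = m \<bullet> (q - f0)"
  have "s \<noteq> 0"
  proof
    assume "s = 0"
    then have "m = 0" using m(2) q(2) by (intro perp_all_zero[OF sp]) (auto simp: s_def)
    then show False using m by simp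
  qed
  define n where "n = (- sgn s / norm m) *\<^sub>R m"
  have "norm n = 1" using m \<open>s \<noteq> 0\<close> by (simp add: n_def abs_sgn)
  moreover have "\<forall>x\<in>F. \<forall>y\<in>F. n \<bullet> (x - y) = 0"
  proof (intro ballI)
    fix x y assume "x \<in> F" "y \<in> F"
    then have "m \<bullet> (x - y) = m \<bullet> (x - f0) - m \<bullet> (y - f0)" by (simp add: inner_diff_right)
    then show "n \<bullet> (x - y) = 0" using m(2) \<open>x \<in> F\<close> \<open>y \<in> F\<close> by (simp add: n_def)
  qed
  moreover have "\<forall>x\<in>F. \<forall>q'\<in>V - F. n \<bullet> (q' - x) < 0"
  proof (intro ballI)
    fix x q' assume "x \<in> F" "q' \<in> V - F"
    then have qq: "q' = q" using q by auto
    have "m \<bullet> (q - x) = s - m \<bullet> (x - f0)" by (simp add: s_def inner_diff_right)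
    then have "m \<bullet> (q - x) = s" using m(2) \<open>x \<in> F\<close> by simp
    then have "n \<bullet> (q' - x) = - (sgn s * s) / norm m" by (simp add: n_def qq)
    also have "\<dots> < 0"
    proof -
      have "sgn s * s = \<bar>s\<bar>" by (simp add: sgn_if abs_if)
      then show ?thesis using \<open>s \<noteq> 0\<close> m(1) by simp
    qed
    finally show "n \<bullet> (q' - x) < 0" .
  qed
  ultimately show ?thesis unfolding onP_def by blast
qed

lemma onormal_onP:
  fixes V F :: "(real^'n) set"
  assumes "simplexV V" "is_face V F"
  shows "onP V F (onormal V F)"
proof -
  have "\<exists>!n. onP V F n" using onP_exists[OF assms] onP_unique[OF assms] by blast
  then show ?thesis unfolding onormal_def onP_def[symmetric] by (rule theI')
qed



lemma small_param:
  fixes lam e W :: real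
  assumes "0 < lam" "0 < e" "0 \<le> W"
  shows "\<exists>s. 0 < s \<and> s \<le> 1 \<and> s * lam \<le> 1/2 \<and> (s / (1 - s * lam)) * W < e"
proof -
  define s where "s = min (1/(2*(lam+1))) (e/(4*(W + 1)))"
  have s0: "0 < s" using assms by (simp add: s_def)
  have s1: "s \<le> 1/(2*(lam+1))" "s \<le> e/(4*(W + 1))" by (auto simp: s_def)
  have h1: "s * (2*(lam+1)) \<le> 1" using s1(1) assms by (simp add: field_simps)
  have h2: "s * (2*(lam+1)) = s * 2 + (s * lam) * 2" by (simp add: algebra_simps)
  have h3: "0 < s*lam" using s0 assms by simp
  have sl1: "s * lam \<le> 1/2" using h1 h2 h3 s0 by linarith
  have sl2: "s \<le> 1/2" using h1 h2 h3 s0 by linarith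
  note sl = sl1 sl2
  have "s / (1 - s * lam) \<le> 2 * s" using sl s0 by (simp add: field_simps)
  then have "(s / (1 - s * lam)) * W \<le> 2 * s * W" using assms by (intro mult_right_mono) auto
  also have "\<dots> \<le> 2 * (e/(4*(W + 1))) * W" using s1 assms by (intro mult_right_mono) auto
  also have "\<dots> < e" using assms by (simp add: field_simps add_pos_nonneg)
  finally show ?thesis using s0 sl by (intro exI[of _ s]) auto
qed

lemma same_side_False:
  fixes V1 V2 F :: "(real^'n) set"
  assumes s2: "simplexV V2" and f2: "is_face V2 F"
    and q1: "q1 \<in> convex hull V1" and q2: "V2 = insert q2 F" and f0: "f0 \<in> F"
    and cF: "convex hull F \<subseteq> convex hull V1"
    and hF: "\<forall>x\<in>F. n \<bullet> (x - f0) = 0" and a: "n \<bullet> (q1 - f0) < 0" and b: "n \<bullet> (q2 - f0) < 0"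
    and int: "convex hull V1 \<inter> convex hull V2 \<subseteq> convex hull F"
  shows False
proof -
  define D where "D = (\<lambda>v. v - f0) ` F"
  have sp2: "span (insert (q2 - f0) D) = UNIV"
    using span_diffs_UNIV[of V2 f0] s2 q2 f0 unfolding simplexV_def D_def by auto
  then have "q1 - f0 \<in> span (insert (q2 - f0) D)" by simp
  then obtain lam where w: "q1 - f0 - lam *\<^sub>R (q2 - f0) \<in> span D"
    using span_breakdown_eq by blast
  define w where "w = q1 - f0 - lam *\<^sub>R (q2 - f0)"
  have nw: "n \<bullet> w = 0"
    using orthogonal_to_span[of w D n] w hF unfolding w_def D_def orthogonal_def by auto
  then have "n \<bullet> (q1 - f0) = lam * (n \<bullet> (q2 - f0))"
    unfolding w_def by (simp add: inner_diff_right)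
  then have lam: "0 < lam" using a b by (simp add: zero_less_mult_iff mult_less_0_iff)
  have "convex hull F \<noteq> {}" using f0 by auto
  then obtain c where c: "c \<in> rel_interior (convex hull F)"
    using rel_interior_eq_empty[of "convex hull F"] by auto
  then obtain e where e: "e > 0" "ball c e \<inter> affine hull F \<subseteq> convex hull F" "c \<in> convex hull F"
    unfolding mem_rel_interior_ball affine_hull_convex_hull by blast
  have nc: "n \<bullet> (c - f0) = 0" using hull_in_hyperplane[OF hF e(3)] .
  have DD: "D = insert 0 ((\<lambda>x. -f0 + x) ` (F - {f0}))" unfolding D_def using f0 by force
  have aff: "affine hull F = (\<lambda>x. f0 + x) ` span D"
    unfolding affine_hull_span2[OF f0] DD span_insert_0 ..
  have "c \<in> affine hull F" using e(3) convex_hull_subset_affine_hull by blast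
  then have cD: "c - f0 \<in> span D" unfolding aff by auto
  define w' where "w' = w + (lam - 1) *\<^sub>R (c - f0)"
  have w'D: "w' \<in> span D" unfolding w'_def using w cD unfolding w_def
    by (intro span_add span_scale) auto
  obtain s where s: "0 < s" "s \<le> 1" "s * lam \<le> 1/2" "(s / (1 - s * lam)) * norm w' < e"
    using small_param[OF lam e(1), of "norm w'"] by auto
  define t where "t = s / (1 - s * lam)"
  have t: "(1 - s * lam) * t = s" "t \<ge> 0" using s by (auto simp: t_def)
  define y where "y = c + t *\<^sub>R w'"
  have "y - f0 \<in> span D" unfolding y_def using cD w'D
    by (metis add_diff_eq diff_add_eq span_add span_scale add.commute)
  then have "y \<in> affine hull F" unfolding aff by (intro image_eqI[of _ _ "y - f0"]) auto
  moreover have "y \<in> ball c e" using s t by (simp add: y_def dist_norm t_def)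
  ultimately have yF: "y \<in> convex hull F" using e(2) by blast
  have V2sub: "convex hull F \<subseteq> convex hull V2" "q2 \<in> convex hull V2"
    using q2 hull_mono[of F "insert q2 F" convex] by (auto intro: hull_inc)
  define p where "p = (1 - s * lam) *\<^sub>R y + (s * lam) *\<^sub>R q2"
  have pV2: "p \<in> convex hull V2" unfolding p_def
    using convexD[OF convex_convex_hull, of y V2 q2 "1 - s*lam" "s*lam"] V2sub yF s lam by auto
  have "p = (1 - s * lam) *\<^sub>R c + ((1 - s * lam) * t) *\<^sub>R w' + (s * lam) *\<^sub>R q2"
    unfolding p_def y_def by (simp add: algebra_simps)
  also have "\<dots> = (1 - s) *\<^sub>R c + s *\<^sub>R q1"
    unfolding t(1) w'_def w_def by (simp add: algebra_simps)
  finally have pe: "p = (1 - s) *\<^sub>R c + s *\<^sub>R q1" .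
  have pV1: "p \<in> convex hull V1" unfolding pe
    using convexD[OF convex_convex_hull, of c V1 q1 "1 - s" s] cF e(3) q1 s by auto
  then have "p \<in> convex hull F" using pV2 int by blast
  then have "n \<bullet> (p - f0) = 0" by (rule hull_in_hyperplane[OF hF])
  moreover have "p - f0 = (1 - s) *\<^sub>R (c - f0) + s *\<^sub>R (q1 - f0)" unfolding pe by (simp add: algebra_simps)
  then have "n \<bullet> (p - f0) = s * (n \<bullet> (q1 - f0))" using nc by (simp add: inner_add_right)
  moreover have "s * (n \<bullet> (q1 - f0)) < 0" using s a by (simp add: mult_pos_neg)
  ultimately show False by linarith
qed



lemma opposite_normals:
  fixes V1 V2 F :: "(real^'n) set"
  assumes s1: "simplexV V1" and s2: "simplexV V2" and ne: "V1 \<noteq> V2"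
    and f1: "is_face V1 F" and f2: "is_face V2 F"
    and conf: "convex hull V1 \<inter> convex hull V2 = convex hull (V1 \<inter> V2)"
  shows "onormal V2 F = - onormal V1 F"
proof -
  define n1 where "n1 = onormal V1 F"
  have P1: "onP V1 F n1" unfolding n1_def by (rule onormal_onP[OF s1 f1])
  obtain q1 where q1: "V1 - F = {q1}" "V1 = insert q1 F" "q1 \<notin> F" using face_basic[OF s1 f1] by blast
  obtain q2 where q2: "V2 - F = {q2}" "V2 = insert q2 F" "q2 \<notin> F" using face_basic[OF s2 f2] by blast
  obtain f0 where f0: "f0 \<in> F" using face_basic[OF s1 f1] by blast
  have I: "V1 \<inter> V2 = F"
  proof
    show "V1 \<inter> V2 \<subseteq> F"
    proof
      fix x assume x: "x \<in> V1 \<inter> V2"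
      show "x \<in> F"
      proof (rule ccontr)
        assume "x \<notin> F"
        then have "x = q1" "x = q2" using x q1 q2 by auto
        then show False using ne q1 q2 by simp
      qed
    qed
    show "F \<subseteq> V1 \<inter> V2" using q1 q2 by auto
  qed
  have hF: "\<forall>x\<in>F. n1 \<bullet> (x - f0) = 0" using P1 f0 unfolding onP_def by blast
  have a: "n1 \<bullet> (q1 - f0) < 0" using P1 f0 q1 unfolding onP_def by blast
  define b where "b = n1 \<bullet> (q2 - f0)"
  have sp2: "span ((\<lambda>v. v - f0) ` V2) = UNIV"
    using s2 f0 q2 unfolding simplexV_def by (intro span_diffs_UNIV) auto
  have "b \<noteq> 0"
  proof
    assume "b = 0"
    then have "n1 = 0" using hF q2(2) by (intro perp_all_zero[OF sp2]) (auto simp: b_def)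
    then show False using P1 unfolding onP_def by simp
  qed
  moreover have "\<not> b < 0"
  proof
    assume "b < 0"
    show False
    proof (rule same_side_False[OF s2 f2, of q1 V1 q2 f0 n1])
      show "q1 \<in> convex hull V1" using q1 by (auto intro: hull_inc)
      show "convex hull F \<subseteq> convex hull V1" using q1 hull_mono[of F V1 convex] by auto
      show "convex hull V1 \<inter> convex hull V2 \<subseteq> convex hull F" using conf I by simp
    qed (use q2 f0 hF a \<open>b < 0\<close> b_def in auto)
  qed
  ultimately have bpos: "b > 0" by simp
  have "onP V2 F (- n1)"
    unfolding onP_def
  proof (intro conjI ballI)
    show "norm (- n1) = 1" using P1 unfolding onP_def by simp
    fix x assume x: "x \<in> F"
    { fix y assume "y \<in> F" then show "- n1 \<bullet> (x - y) = 0" using P1 x unfolding onP_def by simp }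
    { fix q assume "q \<in> V2 - F"
      then have "q = q2" using q2 by auto
      have "- n1 \<bullet> (q2 - x) = - (b - n1 \<bullet> (x - f0))" by (simp add: b_def inner_diff_right)
      then show "- n1 \<bullet> (q - x) < 0" using hF x bpos \<open>q = q2\<close> by simp }
  qed
  then show ?thesis unfolding n1_def using onP_unique[OF s2 f2 onormal_onP[OF s2 f2]] by blast
qed



lemma aff_span_D:
  fixes F :: "(real^'n) set"
  assumes f0: "f0 \<in> F"
  shows "affine hull F = (\<lambda>x. f0 + x) ` span ((\<lambda>v. v - f0) ` F)"
proof -
  have DD: "(\<lambda>v. v - f0) ` F = insert 0 ((\<lambda>x. -f0 + x) ` (F - {f0}))" using f0 by force
  show ?thesis unfolding affine_hull_span2[OF f0] DD span_insert_0 ..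
qed

lemma hyperplane_in_aff:
  fixes V F :: "(real^'n) set"
  assumes s: "simplexV V" and f: "is_face V F" and f0: "f0 \<in> F"
    and m: "\<forall>x\<in>F. m \<bullet> (x - f0) = 0" "m \<noteq> 0" and w: "m \<bullet> (w - f0) = 0"
  shows "w \<in> affine hull F"
proof -
  obtain q where q: "V - F = {q}" "V = insert q F" "q \<notin> F" using face_basic[OF s f] by blast
  define D where "D = (\<lambda>v. v - f0) ` F"
  have f0V: "f0 \<in> V" using q(2) f0 by blast
  have sp0: "span ((\<lambda>v. v - f0) ` V) = UNIV"
    using s f0V unfolding simplexV_def by (intro span_diffs_UNIV) auto
  have imV: "(\<lambda>v. v - f0) ` V = insert (q - f0) D" unfolding D_def by (subst q(2)) simp
  have sp: "span (insert (q - f0) D) = UNIV" using sp0 imV by simp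
  then have "w - f0 \<in> span (insert (q - f0) D)" by simp
  then obtain lam where l: "w - f0 - lam *\<^sub>R (q - f0) \<in> span D"
    using span_breakdown_eq by blast
  have ms: "m \<bullet> (w - f0 - lam *\<^sub>R (q - f0)) = 0"
    using orthogonal_to_span[OF l, of m] m(1) unfolding D_def orthogonal_def by auto
  have "m \<bullet> (q - f0) \<noteq> 0"
  proof
    assume h: "m \<bullet> (q - f0) = 0"
    have "m = 0"
    proof (rule perp_all_zero[OF sp])
      fix y assume "y \<in> insert (q - f0) D"
      then show "m \<bullet> y = 0" using h m(1) unfolding D_def by auto
    qed
    then show False using m(2) by simp
  qed
  then have "lam = 0" using ms w by (simp add: inner_diff_right)
  then have "w - f0 \<in> span D" using l by simp
  then show ?thesis unfolding aff_span_D[OF f0] D_def[symmetric]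
    by (intro image_eqI[of _ _ "w - f0"]) auto
qed

lemma fnormal_props:
  fixes V F :: "(real^'n) set"
  assumes s: "simplexV V" and f: "is_face V F"
  shows "norm (fnormal F) = 1" "\<forall>x\<in>F. \<forall>y\<in>F. fnormal F \<bullet> (x - y) = 0"
proof -
  obtain f0 where f0: "f0 \<in> F" using face_basic[OF s f] by blast
  obtain m where m: "m \<noteq> 0" "\<forall>x\<in>F. m \<bullet> (x - f0) = 0"
    using normal_exists[of F f0] face_basic[OF s f] f0 f unfolding is_face_def by blast
  define n where "n = m /\<^sub>R norm m"
  have "norm n = 1 \<and> (\<forall>x\<in>F. \<forall>y\<in>F. n \<bullet> (x - y) = 0)"
  proof (intro conjI ballI)
    show "norm n = 1" using m by (simp add: n_def)
    fix x y assume "x \<in> F" "y \<in> F"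
    then have "m \<bullet> (x - y) = m \<bullet> (x - f0) - m \<bullet> (y - f0)" by (simp add: inner_diff_right)
    then show "n \<bullet> (x - y) = 0" using m(2) \<open>x \<in> F\<close> \<open>y \<in> F\<close> by (simp add: n_def)
  qed
  then have "norm (fnormal F) = 1 \<and> (\<forall>x\<in>F. \<forall>y\<in>F. fnormal F \<bullet> (x - y) = 0)"
    unfolding fnormal_def by (rule someI)
  then show "norm (fnormal F) = 1" "\<forall>x\<in>F. \<forall>y\<in>F. fnormal F \<bullet> (x - y) = 0" by auto
qed

lemma fproj_prism_pt:
  fixes V F :: "(real^'n) set"
  assumes s: "simplexV V" and f: "is_face V F" and x: "x \<in> convex hull F"
  shows "fproj F (x + t *\<^sub>R fnormal F) = x"
proof -
  have ne: "F \<noteq> {}" using face_basic[OF s f] by blast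
  define x0 where "x0 = (SOME x. x \<in> F)"
  have x0: "x0 \<in> F" using ne unfolding x0_def by (simp add: some_in_eq)
  note fp = fnormal_props[OF s f]
  have "fnormal F \<bullet> (x - x0) = 0"
    by (rule hull_in_hyperplane[OF _ x]) (use fp(2) x0 in auto)
  moreover have "fnormal F \<bullet> fnormal F = 1" using fp(1) by (simp add: norm_eq_1)
  ultimately have "(x + t *\<^sub>R fnormal F - x0) \<bullet> fnormal F = t"
    by (simp add: inner_commute inner_diff_left inner_add_left algebra_simps)
  then show ?thesis unfolding fproj_def x0_def[symmetric] by simp
qed

lemma compact_prism:
  fixes V F :: "(real^'n) set"
  assumes s: "simplexV V" and f: "is_face V F"
  shows "compact (prism F)"
proof -
  have "prism F = (\<lambda>p. fst p + snd p *\<^sub>R fnormal F) ` ((convex hull F) \<times> {0..1})"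
    unfolding prism_def
  proof (rule set_eqI, rule iffI)
    fix z assume "z \<in> {x + t *\<^sub>R fnormal F |x t. x \<in> convex hull F \<and> 0 \<le> t \<and> t \<le> 1}"
    then obtain x t where "z = x + t *\<^sub>R fnormal F" "x \<in> convex hull F" "0 \<le> t" "t \<le> 1" by blast
    then show "z \<in> (\<lambda>p. fst p + snd p *\<^sub>R fnormal F) ` ((convex hull F) \<times> {0..1})"
      by (intro image_eqI[of _ _ "(x, t)"]) auto
  next
    fix z assume "z \<in> (\<lambda>p. fst p + snd p *\<^sub>R fnormal F) ` ((convex hull F) \<times> {0..1})"
    then obtain x t where "z = x + t *\<^sub>R fnormal F" "x \<in> convex hull F" "0 \<le> t" "t \<le> 1" by auto
    then show "z \<in> {x + t *\<^sub>R fnormal F |x t. x \<in> convex hull F \<and> 0 \<le> t \<and> t \<le> 1}" by blast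
  qed
  moreover have "compact (convex hull F)"
    using face_basic[OF s f] by (intro finite_imp_compact_convex_hull) auto
  ultimately show ?thesis
    by (simp only:) (intro compact_continuous_image continuous_intros compact_Times, auto)
qed

lemma cont_fproj: "continuous_on S (fproj F)"
  unfolding fproj_def by (intro continuous_intros)

lemma integrable_compact:
  fixes h :: "real^'n \<Rightarrow> real"
  assumes "compact P" "continuous_on UNIV h"
  shows "h integrable_on P"
proof -
  have "integrable lborel (\<lambda>x. indicator P x *\<^sub>R h x)"
    by (rule borel_integrable_compact[OF assms(1) continuous_on_subset[OF assms(2)]]) simp
  then have "(\<lambda>x. indicator P x *\<^sub>R h x) integrable_on UNIV" by (rule integrable_on_lborel)
  moreover have "(\<lambda>x. indicator P x *\<^sub>R h x) = (\<lambda>x. if x \<in> P then h x else 0)"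
    by (auto simp: indicator_def)
  ultimately have "(\<lambda>x. if x \<in> P then h x else 0) integrable_on UNIV" by simp
  then show ?thesis by (simp only: Henstock_Kurzweil_Integration.integrable_restrict_UNIV)
qed

lemma face_integrable:
  fixes V F :: "(real^'n) set"
  fixes g :: "real^'n \<Rightarrow> real"
  assumes s: "simplexV V" and f: "is_face V F" and g: "continuous_on UNIV g"
  shows "(\<lambda>y. g (fproj F y)) integrable_on prism F"
  by (rule integrable_compact[OF compact_prism[OF s f]])
     (rule continuous_on_compose2[OF g cont_fproj], auto)

lemma face_integral_add:
  fixes V F :: "(real^'n) set" and g1 g2 :: "real^'n \<Rightarrow> real"
  assumes s: "simplexV V" and f: "is_face V F"
    and g: "continuous_on UNIV g1" "continuous_on UNIV g2"
  shows "face_integral F (\<lambda>x. g1 x + g2 x) = face_integral F g1 + face_integral F g2"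
  unfolding face_integral_def
  by (rule integral_add[OF face_integrable[OF s f g(1)] face_integrable[OF s f g(2)]])



lemma ball_zero:
  fixes h :: "real^'n \<Rightarrow> real"
  assumes hc: "continuous_on UNIV h" and hn: "\<And>y. 0 \<le> h y"
    and hi: "h integrable_on P" and h0: "integral P h = 0"
    and r: "0 < r" and sub: "ball y0 r \<subseteq> P"
  shows "h y0 = 0"
proof -
  define d where "d = r / (2 * real CARD('n))"
  have d: "0 < d" using r by (simp add: d_def)
  define a where "a = y0 - (\<chi> i. d)"
  define b where "b = y0 + (\<chi> i. d)"
  have cb: "cbox a b \<subseteq> ball y0 r"
  proof
    fix z assume "z \<in> cbox a b"
    then have zi0: "\<forall>i. y0 $ i - d \<le> z $ i \<and> z $ i \<le> y0 $ i + d" unfolding mem_box_cart a_def b_def by auto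
    have zi: "\<bar>(y0 - z) $ i\<bar> \<le> d" for i using spec[OF zi0, of i] by (auto simp: abs_le_iff)
    have "norm (y0 - z) \<le> (\<Sum>i\<in>UNIV. \<bar>(y0 - z) $ i\<bar>)" by (rule norm_le_l1_cart)
    also have "\<dots> \<le> (\<Sum>i\<in>(UNIV::'n set). d)" by (rule sum_mono) (rule zi)
    also have "\<dots> = r / 2" by (simp add: d_def)
    also have "\<dots> < r" using r by simp
    finally show "z \<in> ball y0 r" by (simp add: dist_norm)
  qed
  have ci: "h integrable_on cbox a b" by (rule integrable_continuous) (rule continuous_on_subset[OF hc], simp)
  have "integral (cbox a b) h \<le> integral P h"
    by (rule integral_subset_le) (use cb sub ci hi hn in auto)
  moreover have "0 \<le> integral (cbox a b) h" by (rule integral_nonneg[OF ci]) (simp add: hn)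
  ultimately have "integral (cbox a b) h = 0" using h0 by simp
  then have hi0: "(h has_integral 0) (cbox a b)" using ci by (metis integrable_integral)
  have "y0 \<in> box a b" using d unfolding mem_box_cart a_def b_def by auto
  then show ?thesis
    by (intro has_integral_0_cbox_imp_0[OF continuous_on_subset[OF hc] _ hi0]) (auto simp: hn intro: box_subset_cbox[THEN subsetD])
qed

lemma proj_norm_le:
  fixes v n :: "real^'n"
  assumes "norm n = 1"
  shows "norm (v - (v \<bullet> n) *\<^sub>R n) \<le> norm v"
proof -
  have nn: "n \<bullet> n = 1" using assms by (simp add: norm_eq_1)
  have "(v - (v \<bullet> n) *\<^sub>R n) \<bullet> (v - (v \<bullet> n) *\<^sub>R n) = v \<bullet> v - (v \<bullet> n)^2"
    by (simp add: inner_diff_left inner_diff_right nn inner_commute power2_eq_square)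
  also have "\<dots> \<le> v \<bullet> v" by simp
  finally show ?thesis by (simp add: norm_le)
qed

lemma face_zero:
  fixes V F :: "(real^'n) set" and g :: "real^'n \<Rightarrow> real"
  assumes s: "simplexV V" and f: "is_face V F" and gc: "continuous_on UNIV g"
    and i0: "face_integral F (\<lambda>x. (g x)^2) = 0" and x: "x \<in> convex hull F"
  shows "g x = 0"
proof -
  define fn where "fn = fnormal F"
  have fn1: "norm fn = 1" and fnF: "\<forall>x\<in>F. \<forall>y\<in>F. fn \<bullet> (x - y) = 0"
    using fnormal_props[OF s f] by (auto simp: fn_def)
  have fnfn: "fn \<bullet> fn = 1" using fn1 by (simp add: norm_eq_1)
  obtain f0 where f0: "f0 \<in> F" using face_basic[OF s f] by blast
  have fnF0: "\<forall>x\<in>F. fn \<bullet> (x - f0) = 0" using fnF f0 by blast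
  have fn0: "fn \<noteq> 0" using fn1 by auto
  define h where "h = (\<lambda>y. (g (fproj F y))^2)"
  have hc: "continuous_on UNIV h" unfolding h_def
    by (intro continuous_intros continuous_on_compose2[OF gc cont_fproj]) auto
  have hn: "\<And>y. 0 \<le> h y" by (simp add: h_def)
  have hi: "h integrable_on prism F" unfolding h_def
    using face_integrable[OF s f, of "\<lambda>x. (g x)^2"] gc
    by (simp add: continuous_intros)
  have h0: "integral (prism F) h = 0" using i0 by (simp add: face_integral_def h_def)
  have "convex hull F \<noteq> {}" using f0 by auto
  then obtain c where c: "c \<in> rel_interior (convex hull F)"
    using rel_interior_eq_empty[of "convex hull F"] by auto
  then obtain e where e: "e > 0" "ball c e \<inter> affine hull F \<subseteq> convex hull F" "c \<in> convex hull F"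
    unfolding mem_rel_interior_ball affine_hull_convex_hull by blast
  have fnc: "fn \<bullet> (c - f0) = 0" by (rule hull_in_hyperplane[OF fnF0 e(3)])
  have zero_s: "g ((1 - s) *\<^sub>R x + s *\<^sub>R c) = 0" if sp: "0 < s" "s \<le> 1" for s
  proof -
    define xs where "xs = (1 - s) *\<^sub>R x + s *\<^sub>R c"
    have xsF: "xs \<in> convex hull F" unfolding xs_def
      using convexD[OF convex_convex_hull, of x F c "1 - s" s] x e(3) sp by auto
    define rho where "rho = min (s * e) (1/2)"
    have rho: "0 < rho" using sp e by (simp add: rho_def)
    define y0 where "y0 = xs + (1/2) *\<^sub>R fn"
    have "ball y0 rho \<subseteq> prism F"
    proof
      fix z assume "z \<in> ball y0 rho"
      then have vz: "norm (z - y0) < rho" by (simp add: dist_norm norm_minus_commute)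
      define v where "v = z - y0"
      define t where "t = 1/2 + v \<bullet> fn"
      define w where "w = v - (v \<bullet> fn) *\<^sub>R fn"
      define u' where "u' = c + (1/s) *\<^sub>R w"
      have "\<bar>v \<bullet> fn\<bar> \<le> norm v * norm fn" by (rule Cauchy_Schwarz_ineq2)
      then have "\<bar>v \<bullet> fn\<bar> < 1/2" using vz fn1 unfolding v_def rho_def by simp
      then have t01: "0 \<le> t" "t \<le> 1" unfolding t_def by auto
      have nw: "norm w \<le> norm v" unfolding w_def by (rule proj_norm_le[OF fn1])
      have "norm w < s * e" using nw vz unfolding v_def rho_def by simp
      then have "norm ((1/s) *\<^sub>R w) < e" using sp by (simp add: field_simps)
      then have u'b: "u' \<in> ball c e" unfolding u'_def by (simp add: dist_norm)
      have "fn \<bullet> w = 0" unfolding w_def by (simp add: inner_diff_right fnfn inner_commute)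
      then have "fn \<bullet> (u' - f0) = 0" unfolding u'_def using fnc
        by (simp add: inner_diff_right inner_add_right algebra_simps)
      then have "u' \<in> affine hull F"
        by (intro hyperplane_in_aff[OF s f f0 fnF0 fn0])
      then have u'F: "u' \<in> convex hull F" using u'b e(2) by blast
      define u where "u = (1 - s) *\<^sub>R x + s *\<^sub>R u'"
      have uF: "u \<in> convex hull F" unfolding u_def
        using convexD[OF convex_convex_hull, of x F u' "1 - s" s] x u'F sp by auto
      have "z = u + t *\<^sub>R fn"
        unfolding u_def u'_def t_def w_def v_def y0_def xs_def using sp
        by (simp add: algebra_simps)
      then show "z \<in> prism F" unfolding prism_def fn_def using uF t01 by blast
    qed
    then have "h y0 = 0" by (rule ball_zero[OF hc hn hi h0 rho])
    moreover have "fproj F y0 = xs" unfolding y0_def fn_def by (rule fproj_prism_pt[OF s f xsF])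
    ultimately show ?thesis by (simp add: h_def xs_def)
  qed
  define phi where "phi = (\<lambda>s::real. g ((1 - s) *\<^sub>R x + s *\<^sub>R c))"
  have pc: "continuous_on (closure {0<..1}) phi" unfolding phi_def
    by (intro continuous_on_compose2[OF gc] continuous_intros) auto
  have "phi 0 = 0"
    by (rule continuous_constant_on_closure[OF pc]) (auto simp: phi_def zero_s)
  then show ?thesis by (simp add: phi_def)
qed



lemma matvec_Pk:
  fixes g :: "real^'n \<Rightarrow> real^'n"
  assumes "\<And>j. (\<lambda>x. g x $ j) \<in> Pk k"
  shows "(\<lambda>x. (A *v g x) \<bullet> n) \<in> Pk k"
proof -
  have "(\<lambda>x. (A *v g x) \<bullet> n) = (\<lambda>x. \<Sum>i\<in>UNIV. \<Sum>j\<in>UNIV. (n $ i * A $ i $ j) * g x $ j)"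
    by (simp add: inner_vec_def matrix_vector_mult_def sum_distrib_left sum_distrib_right mult_ac)
  also have "\<dots> \<in> Pk k"
    by (intro Pk_sum Pk_scale assms) auto
  finally show ?thesis .
qed

lemma hs_dot:
  "hatsigma a CT kap u uh V F x \<bullet> onormal V F =
     - ((kap V *v grad (u V) x) \<bullet> onormal V F)
     + tauEF a CT kap V F * (u V x - uh F x) * (onormal V F \<bullet> onormal V F)"
  by (simp add: hatsigma_def sigma_def hjump_def inner_add_left inner_diff_left)

lemma hsn_Pk:
  assumes "u V \<in> Pk k" "uh F \<in> Pk k"
  shows "(\<lambda>x. hatsigma a CT kap u uh V F x \<bullet> onormal V F) \<in> Pk k"
proof -
  have g: "(\<lambda>x. (kap V *v grad (u V) x) \<bullet> onormal V F) \<in> Pk k"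
    by (intro matvec_Pk grad_comp_Pk assms)
  have "(\<lambda>x. (-1) * ((kap V *v grad (u V) x) \<bullet> onormal V F)
     + (tauEF a CT kap V F * (onormal V F \<bullet> onormal V F)) * (u V x - uh F x)) \<in> Pk k"
    by (intro Pk_add Pk_scale Pk_diff g assms)
  then show ?thesis unfolding hs_dot by (simp add: algebra_simps)
qed

lemma tau_pos:
  fixes V F :: "(real^'n) set"
  assumes s: "simplexV V" and f: "is_face V F" and a: "0 < a" and ct: "0 < CT" and km: "0 < kmin"
    and kb: "\<forall>\<xi>. kmin * (norm \<xi>)\<^sup>2 \<le> \<xi> \<bullet> (kap V *v \<xi>)"
  shows "0 < tauEF a CT kap V F"
proof -
  have n1: "norm (onormal V F) = 1" using onormal_onP[OF s f] unfolding onP_def by simp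
  have "kmin \<le> kappaEF kap V F" using kb[rule_format, of "onormal V F"] n1 unfolding kappaEF_def by simp
  then have kp: "0 < kappaEF kap V F" using km by simp
  have "card V \<ge> 2" using s unfolding simplexV_def by simp
  have fin: "finite V" using s unfolding simplexV_def by simp
  have "V \<noteq> {}"
  proof
    assume "V = {}" then show False using \<open>card V \<ge> 2\<close> by simp
  qed
  then obtain v1 where v1: "v1 \<in> V" by blast
  have c1: "card (V - {v1}) \<ge> 1" using \<open>card V \<ge> 2\<close> v1 fin by (simp add: card_Diff_singleton)
  have "V - {v1} \<noteq> {}"
  proof
    assume "V - {v1} = {}"
    then have "card (V - {v1}) = 0" by (simp only: card.empty)
    then show False using c1 by linarith
  qed
  then obtain v2 where v2: "v2 \<in> V - {v1}" by blast
  have v: "v1 \<in> V" "v2 \<in> V" "v1 \<noteq> v2" using v1 v2 by auto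
  have "bounded (convex hull V)" using finite_imp_compact_convex_hull[OF fin] compact_imp_bounded by blast
  then have "dist v1 v2 \<le> diameter (convex hull V)"
    using v by (intro diameter_bounded_bound) (auto intro: hull_inc)
  moreover have "0 < dist v1 v2" using v by simp
  ultimately have "0 < hE V" unfolding hE_def by linarith
  then show ?thesis unfolding tauEF_def using a ct kp by simp
qed


lemma mesh_simplex:
  fixes T :: "(real^'n) set set"
  assumes "conforming_simplicial_mesh \<Omega> T" "V \<in> T"
  shows "simplexV V"
proof -
  have "\<forall>V\<in>T. finite V \<and> card V = CARD('n) + 1 \<and> \<not> affine_dependent V"
    using assms(1) unfolding conforming_simplicial_mesh_def
    by (rule conjunct1[OF conjunct2[OF conjunct2]])
  then show ?thesis using assms(2) unfolding simplexV_def by (rule bspec)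
qed

lemma mesh_conf:
  fixes T :: "(real^'n) set set"
  assumes "conforming_simplicial_mesh \<Omega> T" "V1 \<in> T" "V2 \<in> T" "V1 \<noteq> V2"
  shows "convex hull V1 \<inter> convex hull V2 = convex hull (V1 \<inter> V2)"
proof -
  have "\<forall>V1\<in>T. \<forall>V2\<in>T. V1 \<noteq> V2 \<longrightarrow>
        interior (convex hull V1) \<inter> interior (convex hull V2) = {} \<and>
        (convex hull V1) \<inter> (convex hull V2) = convex hull (V1 \<inter> V2)"
    using assms(1) unfolding conforming_simplicial_mesh_def
    by (rule conjunct2[OF conjunct2[OF conjunct2[OF conjunct2]]])
  then have "interior (convex hull V1) \<inter> interior (convex hull V2) = {} \<and>
        (convex hull V1) \<inter> (convex hull V2) = convex hull (V1 \<inter> V2)"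
    using assms(2-4) by simp
  then show ?thesis by (rule conjunct2)
qed

lemma face_integral_zero: "face_integral F (\<lambda>x. 0) = 0"
  unfolding face_integral_def by simp

lemma finite_faces: "finite V \<Longrightarrow> finite {F. is_face V F}"
  by (rule finite_subset[of _ "Pow V"]) (auto simp: is_face_def)

lemma two_elements:
  fixes T :: "(real^'n) set set"
  assumes mesh: "conforming_simplicial_mesh \<Omega> T"
    and V1: "V1 \<in> T" and V2: "V2 \<in> T" and ne: "V1 \<noteq> V2"
    and f1: "is_face V1 F" and f2: "is_face V2 F"
  shows "{V \<in> T. is_face V F} = {V1, V2}"
proof
  show "{V1, V2} \<subseteq> {V \<in> T. is_face V F}" using assms by auto
  show "{V \<in> T. is_face V F} \<subseteq> {V1, V2}"
  proof
    fix V3 assume "V3 \<in> {V \<in> T. is_face V F}"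
    then have V3: "V3 \<in> T" "is_face V3 F" by auto
    show "V3 \<in> {V1, V2}"
    proof (rule ccontr)
      assume "V3 \<notin> {V1, V2}"
      then have n31: "V1 \<noteq> V3" and n32: "V2 \<noteq> V3" by auto
      note s = mesh_simplex[OF mesh]
      have a: "onormal V3 F = - onormal V1 F"
        by (rule opposite_normals[OF s[OF V1] s[OF V3(1)] n31 f1 V3(2) mesh_conf[OF mesh V1 V3(1) n31]])
      have b: "onormal V3 F = - onormal V2 F"
        by (rule opposite_normals[OF s[OF V2] s[OF V3(1)] n32 f2 V3(2) mesh_conf[OF mesh V2 V3(1) n32]])
      have c: "onormal V2 F = - onormal V1 F"
        by (rule opposite_normals[OF s[OF V1] s[OF V2] ne f1 f2 mesh_conf[OF mesh V1 V2 ne]])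
      have e1: "- onormal V1 F = - onormal V2 F" using sym[OF a] b by (rule trans)
      have e2: "onormal V1 F = onormal V2 F" using e1 by (simp only: neg_equal_iff_equal)
      have e3: "onormal V1 F = - onormal V1 F" using e2 c by (rule trans)
      have "onormal V1 F \<bullet> onormal V1 F = onormal V1 F \<bullet> (- onormal V1 F)"
        using e3 by (rule arg_cong[where f="inner (onormal V1 F)"])
      then have "onormal V1 F \<bullet> onormal V1 F = 0" by simp
      then have "onormal V1 F = 0" by simp
      then show False using onormal_onP[OF s[OF V1] f1] unfolding onP_def by simp
    qed
  qed
qed

lemma alg_z:
  fixes K1 K2 t1 t2 u1 u2 z :: real
  assumes fl': "- K1 + t1 * (u1 - z) + (K2 + t2 * (u2 - z)) = 0" and d: "t1 + t2 \<noteq> 0"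
  shows "z = (t1 * u1 + t2 * u2 - K1 + K2) / (t1 + t2)"
proof -
  have h: "z * (t1 + t2) = t1 * u1 + t2 * u2 - K1 + K2" using fl' by (simp add: algebra_simps)
  then show ?thesis using d by (simp add: eq_divide_eq)
qed

lemma alg_a:
  fixes K1 K2 t1 t2 u1 u2 :: real
  shows "(t1 * u1 + t2 * u2 - K1 + K2) / (t1 + t2) = (t1 / (t1 + t2) * u1 + t2 / (t1 + t2) * u2) - 1 / (t1 + t2) * (K1 + - K2)"
  by (simp add: add_divide_distrib diff_divide_distrib)

lemma alg_c:
  fixes K1 K2 t1 t2 u1 u2 z :: real
  assumes za: "z = (t1 * u1 + t2 * u2 - K1 + K2) / (t1 + t2)" and d: "t1 + t2 \<noteq> 0"
  shows "- K1 + t1 * (u1 - z) = - (t2 / (t1 + t2) * K1 + t1 / (t1 + t2) * K2) + t1 * t2 / (t1 + t2) * (u1 * 1 + u2 * - 1)"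
proof -
  have "- K1 + t1 * (u1 - z) = (- K1 * (t1 + t2) + t1 * u1 * (t1 + t2) - t1 * (t1 * u1 + t2 * u2 - K1 + K2)) / (t1 + t2)"
    unfolding za using d by (simp add: field_simps)
  also have "- K1 * (t1 + t2) + t1 * u1 * (t1 + t2) - t1 * (t1 * u1 + t2 * u2 - K1 + K2) = - (t2 * K1) - t1 * K2 + t1 * t2 * (u1 - u2)"
    by (simp add: algebra_simps)
  finally show ?thesis by (simp add: add_divide_distrib diff_divide_distrib)
qed

theorem mainTheorem2:
  fixes \<Omega> :: "(real^'n) set"
    and T :: "(real^'n) set set"
    and kap :: "(real^'n) set \<Rightarrow> real^'n^'n"
    and kmin kmax CT alpha0 eps :: real
    and k :: nat
    and f :: "real^'n \<Rightarrow> real"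
    and u uh :: "(real^'n) set \<Rightarrow> real^'n \<Rightarrow> real"
  assumes dim: "CARD('n) = 2 \<or> CARD('n) = 3"
    and dom: "lipschitz_domain \<Omega>"
    and mesh: "conforming_simplicial_mesh \<Omega> T"
    and h_le: "\<forall>V\<in>T. hE V \<le> 1"
    and kap_sym: "\<forall>V\<in>T. transpose (kap V) = kap V"
    and kap_bnd: "0 < kmin" "kmin \<le> kmax"
      "\<forall>V\<in>T. \<forall>\<xi>. kmin * (norm \<xi>)\<^sup>2 \<le> \<xi> \<bullet> (kap V *v \<xi>) \<and> \<xi> \<bullet> (kap V *v \<xi>) \<le> kmax * (norm \<xi>)\<^sup>2"
    and k: "1 \<le> k"
    and CT: "0 < CT"
      "\<forall>V\<in>T. \<forall>F. is_face V F \<longrightarrow> (\<forall>w\<in>Pk k.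
          face_integral F (\<lambda>x. (w x)\<^sup>2) \<le> CT\<^sup>2 / hE V * integral (convex hull V) (\<lambda>x. (w x)\<^sup>2))"
    and alpha0: "0 < alpha0"
    and eps: "eps \<in> {-1, 0, 1}"
    and f: "f \<in> borel_measurable lebesgue" "set_integrable lebesgue \<Omega> (\<lambda>x. (f x)\<^sup>2)"
    and sol: "HIP_solution k eps alpha0 CT T kap f u uh"
  shows
    "(\<forall>V1\<in>T. \<forall>V2\<in>T. \<forall>F. V1 \<noteq> V2 \<and> is_face V1 F \<and> is_face V2 F \<longrightarrow>
       (let t1 = tauEF alpha0 CT kap V1 F; t2 = tauEF alpha0 CT kap V2 F;
            n1 = onormal V1 F; n2 = onormal V2 F;
            w1 = t1 / (t1 + t2); w2 = t2 / (t1 + t2);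
            rho0 = t1 * t2 / (t1 + t2); rho1 = 1 / (t1 + t2) in
        \<forall>x\<in>convex hull F.
          \<comment> \<open>(a)\<close>
          uh F x = (w1 * u V1 x + w2 * u V2 x)
                   - rho1 * ((kap V1 *v grad (u V1) x) \<bullet> n1 + (kap V2 *v grad (u V2) x) \<bullet> n2)
          \<comment> \<open>(b)\<close>
        \<and> hatsigma alpha0 CT kap u uh V1 F x \<bullet> n1 + hatsigma alpha0 CT kap u uh V2 F x \<bullet> n2 = 0
          \<comment> \<open>(c), interior faces\<close>
        \<and> hatsigma alpha0 CT kap u uh V1 F x \<bullet> n1 =
            (- (w2 *\<^sub>R (kap V1 *v grad (u V1) x) + w1 *\<^sub>R (kap V2 *v grad (u V2) x))
             + rho0 *\<^sub>R (u V1 x *\<^sub>R n1 + u V2 x *\<^sub>R n2)) \<bullet> n1))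
   \<and> (\<forall>F. boundary_face T F \<longrightarrow>
       (\<forall>x\<in>convex hull F. uh F x = 0) \<and>
       (\<forall>V\<in>T. is_face V F \<longrightarrow> (\<forall>x\<in>convex hull F.
          hatsigma alpha0 CT kap u uh V F x \<bullet> onormal V F =
            (- (kap V *v grad (u V) x)
             + tauEF alpha0 CT kap V F *\<^sub>R (u V x *\<^sub>R onormal V F)) \<bullet> onormal V F)))"
proof -
  note s = mesh_simplex[OF mesh]
  have HS: "in_Vh k T u \<and> in_Vhat k T uh \<and> (\<forall>v vh. in_Vh k T v \<and> in_Vhat k T vh \<longrightarrow> aH eps alpha0 CT T kap u uh v vh = (\<Sum>V\<in>T. (LINT x:convex hull V|lebesgue. f x * v V x)))"
    using sol unfolding HIP_solution_def .
  have uV: "in_Vh k T u" using HS by (rule conjunct1)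
  have uhV: "in_Vhat k T uh" using HS[THEN conjunct2] by (rule conjunct1)
  have eq: "\<forall>v vh. in_Vh k T v \<and> in_Vhat k T vh \<longrightarrow> aH eps alpha0 CT T kap u uh v vh = (\<Sum>V\<in>T. (LINT x:convex hull V|lebesgue. f x * v V x))"
    using HS[THEN conjunct2] by (rule conjunct2)
  have finT: "finite T" using mesh unfolding conforming_simplicial_mesh_def by (rule conjunct1)
  have uhPk: "\<forall>F\<in>faces_of T. uh F \<in> Pk k" using uhV unfolding in_Vhat_def by blast
  have uPk: "\<forall>V\<in>T. u V \<in> Pk k" using uV unfolding in_Vh_def by blast
  have flux: "hatsigma alpha0 CT kap u uh V1 F x \<bullet> onormal V1 F + hatsigma alpha0 CT kap u uh V2 F x \<bullet> onormal V2 F = 0"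
    if V1: "V1 \<in> T" and V2: "V2 \<in> T" and ne: "V1 \<noteq> V2" and f1: "is_face V1 F" and f2: "is_face V2 F"
      and x: "x \<in> convex hull F" for V1 V2 F x
  proof -
    define hs where "hs = (\<lambda>V y. hatsigma alpha0 CT kap u uh V F y \<bullet> onormal V F)"
    define p where "p = (\<lambda>y. hs V1 y + hs V2 y)"
    have FT: "F \<in> faces_of T" using V1 f1 unfolding faces_of_def by blast
    have hsPk: "hs V \<in> Pk k" if "V \<in> T" for V
      unfolding hs_def by (rule hsn_Pk) (use uPk uhPk that FT in auto)
    have pPk: "p \<in> Pk k" unfolding p_def by (intro Pk_add hsPk V1 V2)
    have hc: "continuous_on UNIV (hs V)" if "V \<in> T" for V by (rule cont_Pk[OF hsPk[OF that]])
    have pc: "continuous_on UNIV p" by (rule cont_Pk[OF pPk])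
    have notb: "\<not> boundary_face T F"
      using V1 V2 ne f1 f2 FT unfolding boundary_face_def interior_face_def is_face_def by blast
    define vh where "vh = (\<lambda>F'. if F' = F then p else (\<lambda>y. 0::real))"
    define v where "v = (\<lambda>(V::(real^'n) set) (y::real^'n). 0::real)"
    have vV: "in_Vh k T v" unfolding in_Vh_def v_def using Pk_zero by auto
    have vhV: "in_Vhat k T vh" unfolding in_Vhat_def vh_def using Pk_zero pPk notb by auto
    have "aH eps alpha0 CT T kap u uh v vh = (\<Sum>V\<in>T. (LINT y:convex hull V|lebesgue. f y * v V y))"
      using eq vV vhV by blast
    also have "\<dots> = 0" by (simp add: v_def)
    finally have aH0: "aH eps alpha0 CT T kap u uh v vh = 0" .
    have t1: "(\<Sum>V\<in>T. integral (convex hull V) (\<lambda>y. (kap V *v grad (u V) y) \<bullet> grad (v V) y)) = 0"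
      by (simp add: v_def grad_zero)
    have t3: "(\<Sum>V\<in>T. \<Sum>F'\<in>{F'. is_face V F'}. face_integral F' (\<lambda>y. sigma kap v V y \<bullet> hjump u uh V F' y)) = 0"
      by (simp add: v_def sigma_def grad_zero face_integral_zero)
    have t2i: "(\<Sum>F'\<in>{F'. is_face V F'}. face_integral F' (\<lambda>y. hatsigma alpha0 CT kap u uh V F' y \<bullet> hjump v vh V F' y))
        = (if is_face V F then face_integral F (\<lambda>y. - (p y * hs V y)) else 0)" if VT: "V \<in> T" for V
    proof -
      have "(\<Sum>F'\<in>{F'. is_face V F'}. face_integral F' (\<lambda>y. hatsigma alpha0 CT kap u uh V F' y \<bullet> hjump v vh V F' y))
        = (\<Sum>F'\<in>{F'. is_face V F'}. if F' = F then face_integral F (\<lambda>y. - (p y * hs V y)) else 0)"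
      proof (rule sum.cong[OF refl])
        fix F'
        show "face_integral F' (\<lambda>y. hatsigma alpha0 CT kap u uh V F' y \<bullet> hjump v vh V F' y)
            = (if F' = F then face_integral F (\<lambda>y. - (p y * hs V y)) else 0)"
        proof (cases "F' = F")
          case True
          then show ?thesis by (simp add: hjump_def vh_def v_def hs_def mult.commute)
        next
          case False
          then show ?thesis by (simp add: hjump_def vh_def v_def face_integral_zero)
        qed
      qed
      also have "\<dots> = (if is_face V F then face_integral F (\<lambda>y. - (p y * hs V y)) else 0)"
        using finite_faces[of V] s[OF VT] unfolding simplexV_def by (simp add: sum.delta)
      finally show ?thesis .
    qed
    have t2: "(\<Sum>V\<in>T. \<Sum>F'\<in>{F'. is_face V F'}. face_integral F' (\<lambda>y. hatsigma alpha0 CT kap u uh V F' y \<bullet> hjump v vh V F' y))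
        = face_integral F (\<lambda>y. - (p y * hs V1 y)) + face_integral F (\<lambda>y. - (p y * hs V2 y))"
    proof -
      have "(\<Sum>V\<in>T. \<Sum>F'\<in>{F'. is_face V F'}. face_integral F' (\<lambda>y. hatsigma alpha0 CT kap u uh V F' y \<bullet> hjump v vh V F' y))
          = (\<Sum>V\<in>T. if is_face V F then face_integral F (\<lambda>y. - (p y * hs V y)) else 0)"
        by (rule sum.cong[OF refl]) (rule t2i)
      also have "\<dots> = (\<Sum>V\<in>{V\<in>T. is_face V F}. face_integral F (\<lambda>y. - (p y * hs V y)))"
        by (rule sum.inter_filter[symmetric, OF finT])
      also have "\<dots> = face_integral F (\<lambda>y. - (p y * hs V1 y)) + face_integral F (\<lambda>y. - (p y * hs V2 y))"
        unfolding two_elements[OF mesh V1 V2 ne f1 f2] using ne by simp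
      finally show ?thesis .
    qed
    have sum0: "face_integral F (\<lambda>y. - (p y * hs V1 y)) + face_integral F (\<lambda>y. - (p y * hs V2 y)) = 0"
      using aH0 t1 t2 t3 unfolding aH_def by simp
    have "face_integral F (\<lambda>y. - (p y * hs V1 y) + - (p y * hs V2 y))
        = face_integral F (\<lambda>y. - (p y * hs V1 y)) + face_integral F (\<lambda>y. - (p y * hs V2 y))"
      by (rule face_integral_add[OF s[OF V1] f1];
          intro continuous_on_minus continuous_on_mult pc hc[OF V1] hc[OF V2])
    moreover have "(\<lambda>y. - (p y * hs V1 y) + - (p y * hs V2 y)) = (\<lambda>y. - ((p y)^2))"
      by (auto simp: p_def power2_eq_square algebra_simps)
    ultimately have "face_integral F (\<lambda>y. - ((p y)^2)) = 0" using sum0 by simp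
    then have "face_integral F (\<lambda>y. (p y)^2) = 0" unfolding face_integral_def by simp
    then have "p x = 0" by (rule face_zero[OF s[OF V1] f1 pc _ x])
    then show ?thesis by (simp add: p_def hs_def)
  qed
  show ?thesis
  proof (intro conjI ballI allI impI)
    fix V1 V2 F
    assume V1: "V1 \<in> T" and V2: "V2 \<in> T" and h: "V1 \<noteq> V2 \<and> is_face V1 F \<and> is_face V2 F"
    then have ne: "V1 \<noteq> V2" and f1: "is_face V1 F" and f2: "is_face V2 F" by auto
    have n2: "onormal V2 F = - onormal V1 F"
      by (rule opposite_normals[OF s[OF V1] s[OF V2] ne f1 f2 mesh_conf[OF mesh V1 V2 ne]])
    have nn: "onormal V1 F \<bullet> onormal V1 F = 1"
      using onormal_onP[OF s[OF V1] f1] unfolding onP_def by (simp add: norm_eq_1)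
    have kb1: "\<forall>\<xi>. kmin * (norm \<xi>)\<^sup>2 \<le> \<xi> \<bullet> (kap V1 *v \<xi>)" using kap_bnd(3) V1 by simp
    have tp1: "0 < tauEF alpha0 CT kap V1 F"
      by (rule tau_pos[where kap=kap, OF s[OF V1] f1 alpha0 CT(1) kap_bnd(1) kb1])
    have kb2: "\<forall>\<xi>. kmin * (norm \<xi>)\<^sup>2 \<le> \<xi> \<bullet> (kap V2 *v \<xi>)" using kap_bnd(3) V2 by simp
    have tp2: "0 < tauEF alpha0 CT kap V2 F"
      by (rule tau_pos[where kap=kap, OF s[OF V2] f2 alpha0 CT(1) kap_bnd(1) kb2])
    show "let t1 = tauEF alpha0 CT kap V1 F; t2 = tauEF alpha0 CT kap V2 F;
            n1 = onormal V1 F; n2 = onormal V2 F;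
            w1 = t1 / (t1 + t2); w2 = t2 / (t1 + t2);
            rho0 = t1 * t2 / (t1 + t2); rho1 = 1 / (t1 + t2) in
        \<forall>x\<in>convex hull F.
          uh F x = (w1 * u V1 x + w2 * u V2 x)
                   - rho1 * ((kap V1 *v grad (u V1) x) \<bullet> n1 + (kap V2 *v grad (u V2) x) \<bullet> n2)
        \<and> hatsigma alpha0 CT kap u uh V1 F x \<bullet> n1 + hatsigma alpha0 CT kap u uh V2 F x \<bullet> n2 = 0
        \<and> hatsigma alpha0 CT kap u uh V1 F x \<bullet> n1 =
            (- (w2 *\<^sub>R (kap V1 *v grad (u V1) x) + w1 *\<^sub>R (kap V2 *v grad (u V2) x))
             + rho0 *\<^sub>R (u V1 x *\<^sub>R n1 + u V2 x *\<^sub>R n2)) \<bullet> n1"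
      unfolding Let_def
    proof (intro ballI)
      fix x assume x: "x \<in> convex hull F"
      have fl: "hatsigma alpha0 CT kap u uh V1 F x \<bullet> onormal V1 F + hatsigma alpha0 CT kap u uh V2 F x \<bullet> onormal V2 F = 0"
        by (rule flux[OF V1 V2 ne f1 f2 x])
      define t1 where "t1 = tauEF alpha0 CT kap V1 F"
      define t2 where "t2 = tauEF alpha0 CT kap V2 F"
      define n where "n = onormal V1 F"
      define K1 where "K1 = (kap V1 *v grad (u V1) x) \<bullet> n"
      define K2 where "K2 = (kap V2 *v grad (u V2) x) \<bullet> n"
      define u1 where "u1 = u V1 x"
      define u2 where "u2 = u V2 x"
      define z where "z = uh F x"
      have e1: "hatsigma alpha0 CT kap u uh V1 F x \<bullet> onormal V1 F = - K1 + t1 * (u1 - z)"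
        unfolding hs_dot K1_def t1_def u1_def z_def n_def using nn by simp
      have e2: "hatsigma alpha0 CT kap u uh V2 F x \<bullet> onormal V2 F = K2 + t2 * (u2 - z)"
      proof -
        have "hatsigma alpha0 CT kap u uh V2 F x \<bullet> onormal V2 F = - ((kap V2 *v grad (u V2) x) \<bullet> onormal V2 F)
           + t2 * (u2 - z) * (onormal V2 F \<bullet> onormal V2 F)"
          unfolding t2_def u2_def z_def by (rule hs_dot)
        also have "\<dots> = K2 + t2 * (u2 - z)" unfolding n2 K2_def n_def using nn by simp
        finally show ?thesis .
      qed
      have fl': "- K1 + t1 * (u1 - z) + (K2 + t2 * (u2 - z)) = 0" using fl e1 e2 by simp
      have tt: "t1 > 0" "t2 > 0" using tp1 tp2 by (auto simp: t1_def t2_def)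
      have d: "t1 + t2 \<noteq> 0" using tt by simp
      have zq: "z = (t1 * u1 + t2 * u2 - K1 + K2) / (t1 + t2)" by (rule alg_z[OF fl' d])
      have za: "z = (t1 / (t1 + t2) * u1 + t2 / (t1 + t2) * u2) - 1 / (t1 + t2) * (K1 + - K2)"
        using zq alg_a by simp
      have zc: "- K1 + t1 * (u1 - z) = - (t2 / (t1 + t2) * K1 + t1 / (t1 + t2) * K2) + t1 * t2 / (t1 + t2) * (u1 * 1 + u2 * - 1)"
        by (rule alg_c[OF zq d])
      show "uh F x = (t1 / (t1 + t2) * u V1 x + t2 / (t1 + t2) * u V2 x)
                   - 1 / (t1 + t2) * ((kap V1 *v grad (u V1) x) \<bullet> onormal V1 F + (kap V2 *v grad (u V2) x) \<bullet> onormal V2 F)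
        \<and> hatsigma alpha0 CT kap u uh V1 F x \<bullet> onormal V1 F + hatsigma alpha0 CT kap u uh V2 F x \<bullet> onormal V2 F = 0
        \<and> hatsigma alpha0 CT kap u uh V1 F x \<bullet> onormal V1 F =
            (- ((t2 / (t1 + t2)) *\<^sub>R (kap V1 *v grad (u V1) x) + (t1 / (t1 + t2)) *\<^sub>R (kap V2 *v grad (u V2) x))
             + (t1 * t2 / (t1 + t2)) *\<^sub>R (u V1 x *\<^sub>R onormal V1 F + u V2 x *\<^sub>R onormal V2 F)) \<bullet> onormal V1 F"
      proof (intro conjI)
        show "uh F x = (t1 / (t1 + t2) * u V1 x + t2 / (t1 + t2) * u V2 x)
                   - 1 / (t1 + t2) * ((kap V1 *v grad (u V1) x) \<bullet> onormal V1 F + (kap V2 *v grad (u V2) x) \<bullet> onormal V2 F)"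
          using za unfolding z_def u1_def u2_def K1_def K2_def n2 n_def by simp
        show "hatsigma alpha0 CT kap u uh V1 F x \<bullet> onormal V1 F + hatsigma alpha0 CT kap u uh V2 F x \<bullet> onormal V2 F = 0"
          by (rule fl)
        show "hatsigma alpha0 CT kap u uh V1 F x \<bullet> onormal V1 F =
            (- ((t2 / (t1 + t2)) *\<^sub>R (kap V1 *v grad (u V1) x) + (t1 / (t1 + t2)) *\<^sub>R (kap V2 *v grad (u V2) x))
             + (t1 * t2 / (t1 + t2)) *\<^sub>R (u V1 x *\<^sub>R onormal V1 F + u V2 x *\<^sub>R onormal V2 F)) \<bullet> onormal V1 F"
          unfolding e1 zc unfolding K1_def K2_def u1_def u2_def n_def n2
          by (simp add: inner_add_left inner_diff_left nn)
      qed
    qed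
  next
    fix F x assume "boundary_face T F" "x \<in> convex hull F"
    then show "uh F x = 0" using uhV unfolding in_Vhat_def by blast
  next
    fix F V x assume b: "boundary_face T F" and "V \<in> T" "is_face V F" and x: "x \<in> convex hull F"
    then have "uh F x = 0" using uhV unfolding in_Vhat_def by blast
    then show "hatsigma alpha0 CT kap u uh V F x \<bullet> onormal V F =
            (- (kap V *v grad (u V) x)
             + tauEF alpha0 CT kap V F *\<^sub>R (u V x *\<^sub>R onormal V F)) \<bullet> onormal V F"
      by (simp add: hatsigma_def sigma_def hjump_def)
  qed
qed


end
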